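(* Let $f=\frac1n\sum_{z=1}^nf_z$ where each $\nabla f_z$ is $L$-Lipschitz and $\|\nabla f_z(x)\|\le l$ for all $x$ and $z$. Consider one SCSG epoch (see context) from $\tilde x^{k-1}$ producing $\tilde x^k$, with $b\ge1$, $n\ge 8b$, and $\eta L=\gamma(b/n)^{2/3}$, $\gamma\le\frac13$. Then the increase of function value caused by disturbance satisfies $$\mathbb{E}[f(\tilde x^k)-f(\tilde x^{k-1})]\le\frac{5l^2\gamma^2}{L}\left(\frac bn\right)^{1/3}.$$
   Context: One SCSG epoch from $\tilde x^{k-1}$: $\tilde\mu=\nabla f(\tilde x^{k-1})$, $x_0=\tilde x^{k-1}$, $N\sim\mathrm{Geom}(n/(n+b))$ ($P(N=j)=\frac b{n+b}(\frac n{n+b})^j$, so $\mathbb{E}N=n/b$), for $t=1..N$: $x_t=x_{t-1}-\eta(\nabla f_{I_t}(x_{t-1})-\nabla f_{I_t}(\tilde x^{k-1})+\tilde\mu)$ with $I_t\subset[n]$ uniform of size $b$, $\nabla f_I=\frac1{|I|}\sum_{i\in I}\nabla f_i$; $\tilde x^k=x_N$. *)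

theory Defs
  imports "HOL-Analysis.Analysis" "HOL-Probability.Probability"
begin

definition batches :: "nat \<Rightarrow> nat \<Rightarrow> nat set set" where
  "batches n b = {I. I \<subseteq> {..<n} \<and> card I = b}"

definition bgrad :: "(nat \<Rightarrow> 'a::real_vector \<Rightarrow> 'a) \<Rightarrow> nat set \<Rightarrow> 'a \<Rightarrow> 'a" where
  "bgrad G I x = (1 / real (card I)) *\<^sub>R (\<Sum>i\<in>I. G i x)"

definition fgrad :: "(nat \<Rightarrow> 'a::real_vector \<Rightarrow> 'a) \<Rightarrow> nat \<Rightarrow> 'a \<Rightarrow> 'a" where
  "fgrad G n x = (1 / real n) *\<^sub>R (\<Sum>i<n. G i x)"

text \<open>One inner SCSG step from x, with snapshot x0 and anchor gradient mu;
  the batch I is drawn uniformly from all size-b subsets of [n].\<close>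
definition scsg_step ::
  "(nat \<Rightarrow> 'a::real_vector \<Rightarrow> 'a) \<Rightarrow> nat \<Rightarrow> nat \<Rightarrow> real \<Rightarrow> 'a \<Rightarrow> 'a \<Rightarrow> 'a \<Rightarrow> 'a pmf" where
  "scsg_step G n b \<eta> x0 \<mu> x =
     map_pmf (\<lambda>I. x - \<eta> *\<^sub>R (bgrad G I x - bgrad G I x0 + \<mu>)) (pmf_of_set (batches n b))"

fun scsg_iter ::
  "(nat \<Rightarrow> 'a::real_vector \<Rightarrow> 'a) \<Rightarrow> nat \<Rightarrow> nat \<Rightarrow> real \<Rightarrow> 'a \<Rightarrow> 'a \<Rightarrow> nat \<Rightarrow> 'a \<Rightarrow> 'a pmf" where
  "scsg_iter G n b \<eta> x0 \<mu> 0 x = return_pmf x"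
| "scsg_iter G n b \<eta> x0 \<mu> (Suc j) x = bind_pmf (scsg_iter G n b \<eta> x0 \<mu> j x) (scsg_step G n b \<eta> x0 \<mu>)"

text \<open>One SCSG epoch from x0: N ~ Geom with P(N=j) = b/(n+b) (n/(n+b))^j,
  independent of the batches; output x_N.\<close>
definition scsg_epoch ::
  "(nat \<Rightarrow> 'a::real_vector \<Rightarrow> 'a) \<Rightarrow> nat \<Rightarrow> nat \<Rightarrow> real \<Rightarrow> 'a \<Rightarrow> 'a pmf" where
  "scsg_epoch G n b \<eta> x0 =
     bind_pmf (geometric_pmf (real b / (real n + real b)))
       (\<lambda>N. scsg_iter G n b \<eta> x0 (fgrad G n x0) N x0)"

end

theory Submission
  imports Defs
begin


lemma bind_int_nonneg:
  fixes f :: "'b \<Rightarrow> real"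
  assumes int: "integrable (measure_pmf (bind_pmf M N)) f"
    and inner: "\<And>x. x \<in> set_pmf M \<Longrightarrow> integrable (measure_pmf (N x)) f"
    and nn: "\<And>y. f y \<ge> 0"
  shows "integrable M (\<lambda>x. measure_pmf.expectation (N x) f)
     \<and> measure_pmf.expectation (bind_pmf M N) f = (\<integral>x. measure_pmf.expectation (N x) f \<partial>M)"
proof -
  have fin: "(\<integral>\<^sup>+y. ennreal (f y) \<partial>bind_pmf M N) < \<infinity>"
    using int nn by (simp add: integrable_iff_bounded)
  have eq1: "(\<integral>\<^sup>+y. ennreal (f y) \<partial>bind_pmf M N) = (\<integral>\<^sup>+x. \<integral>\<^sup>+y. ennreal (f y) \<partial>N x \<partial>M)"
    by simp
  have ae2: "AE x in M. (\<integral>\<^sup>+y. ennreal (f y) \<partial>N x) = ennreal (measure_pmf.expectation (N x) f)"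
  proof (rule AE_pmfI)
    fix x assume "x \<in> set_pmf M"
    then show "(\<integral>\<^sup>+y. ennreal (f y) \<partial>N x) = ennreal (measure_pmf.expectation (N x) f)"
      using inner nn by (intro nn_integral_eq_integral) auto
  qed
  have eq2: "(\<integral>\<^sup>+x. ennreal (measure_pmf.expectation (N x) f) \<partial>M) = (\<integral>\<^sup>+y. ennreal (f y) \<partial>bind_pmf M N)"
    using ae2 eq1 by (simp add: nn_integral_cong_AE)
  have gnn: "\<And>x. measure_pmf.expectation (N x) f \<ge> 0"
    using nn by (simp add: integral_nonneg_AE)
  have intg: "integrable M (\<lambda>x. measure_pmf.expectation (N x) f)"
    using fin eq2 gnn by (intro integrableI_bounded) auto
  have "ennreal (\<integral>x. measure_pmf.expectation (N x) f \<partial>M) = ennreal (measure_pmf.expectation (bind_pmf M N) f)"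
    using eq2 nn_integral_eq_integral[OF intg] nn_integral_eq_integral[OF int] gnn nn by simp
  then have "(\<integral>x. measure_pmf.expectation (N x) f \<partial>M) = measure_pmf.expectation (bind_pmf M N) f"
    using gnn nn by (simp add: integral_nonneg_AE)
  with intg show ?thesis by simp
qed

lemma bind_int:
  fixes f :: "'b \<Rightarrow> real"
  assumes int: "integrable (measure_pmf (bind_pmf M N)) f"
    and inner: "\<And>x. x \<in> set_pmf M \<Longrightarrow> integrable (measure_pmf (N x)) f"
  shows "integrable M (\<lambda>x. measure_pmf.expectation (N x) f)
     \<and> measure_pmf.expectation (bind_pmf M N) f = (\<integral>x. measure_pmf.expectation (N x) f \<partial>M)"
proof -
  define fp where "fp = (\<lambda>y. max (f y) 0)"
  define fm where "fm = (\<lambda>y. max (- f y) 0)"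
  have fe: "f = (\<lambda>y. fp y - fm y)" by (auto simp: fp_def fm_def fun_eq_iff)
  have P: "integrable M (\<lambda>x. measure_pmf.expectation (N x) fp)
     \<and> measure_pmf.expectation (bind_pmf M N) fp = (\<integral>x. measure_pmf.expectation (N x) fp \<partial>M)"
    unfolding fp_def using int inner by (intro bind_int_nonneg) auto
  have Q: "integrable M (\<lambda>x. measure_pmf.expectation (N x) fm)
     \<and> measure_pmf.expectation (bind_pmf M N) fm = (\<integral>x. measure_pmf.expectation (N x) fm \<partial>M)"
    unfolding fm_def using int inner by (intro bind_int_nonneg) auto
  have ip: "integrable (bind_pmf M N) fp" "integrable (bind_pmf M N) fm"
    unfolding fp_def fm_def using int by auto
  have ae: "AE x in M. measure_pmf.expectation (N x) f
        = measure_pmf.expectation (N x) fp - measure_pmf.expectation (N x) fm"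
  proof (rule AE_pmfI)
    fix x assume "x \<in> set_pmf M"
    then have "integrable (N x) f" using inner by auto
    then have "integrable (N x) fp" "integrable (N x) fm" unfolding fp_def fm_def by auto
    then show "measure_pmf.expectation (N x) f
        = measure_pmf.expectation (N x) fp - measure_pmf.expectation (N x) fm"
      by (subst fe) (rule Bochner_Integration.integral_diff)
  qed
  have i2: "integrable M (\<lambda>x. measure_pmf.expectation (N x) fp - measure_pmf.expectation (N x) fm)"
    using P Q by auto
  have "integrable M (\<lambda>x. measure_pmf.expectation (N x) f)"
    using i2 ae by (subst integrable_cong_AE) auto
  moreover have "measure_pmf.expectation (bind_pmf M N) f = (\<integral>x. measure_pmf.expectation (N x) f \<partial>M)"
  proof -
    have "measure_pmf.expectation (bind_pmf M N) f = measure_pmf.expectation (bind_pmf M N) fp - measure_pmf.expectation (bind_pmf M N) fm"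
      using ip by (subst fe) (rule Bochner_Integration.integral_diff)
    also have "\<dots> = (\<integral>x. measure_pmf.expectation (N x) fp \<partial>M) - (\<integral>x. measure_pmf.expectation (N x) fm \<partial>M)"
      using P Q by simp
    also have "\<dots> = (\<integral>x. measure_pmf.expectation (N x) fp - measure_pmf.expectation (N x) fm \<partial>M)"
      using P Q by (intro Bochner_Integration.integral_diff[symmetric]) auto
    also have "\<dots> = (\<integral>x. measure_pmf.expectation (N x) f \<partial>M)"
      using ae by (intro integral_cong_AE) auto
    finally show ?thesis .
  qed
  ultimately show ?thesis by simp
qed



lemma descent:
  fixes F :: "'a::euclidean_space \<Rightarrow> real" and G :: "'a \<Rightarrow> 'a"
  assumes gd: "\<And>x. GDERIV F x :> G x" and lp: "\<And>x y. norm (G x - G y) \<le> L * norm (x - y)"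
  shows "F y \<le> F x + (y - x) \<bullet> G x + L / 2 * norm (y - x)^2"
proof -
  define d where "d = y - x"
  define \<psi> where "\<psi> = (\<lambda>t::real. F (x + t *\<^sub>R d) - t * (d \<bullet> G x) - L / 2 * t^2 * norm d ^ 2)"
  have D: "DERIV \<psi> t :> (d \<bullet> G (x + t *\<^sub>R d) - d \<bullet> G x - L * t * norm d ^ 2)" for t
  proof -
    have h1: "(F has_derivative (\<lambda>h. h \<bullet> G (x + t *\<^sub>R d))) (at (x + t *\<^sub>R d))"
      using gd unfolding gderiv_def by blast
    have h2: "((\<lambda>t. x + t *\<^sub>R d) has_derivative (\<lambda>s. s *\<^sub>R d)) (at t)"
      by (auto intro!: derivative_eq_intros)
    have "((\<lambda>t. F (x + t *\<^sub>R d)) has_derivative (\<lambda>s. (s *\<^sub>R d) \<bullet> G (x + t *\<^sub>R d))) (at t)"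
      using has_derivative_compose[OF h2 h1] by (simp add: o_def)
    then have "((\<lambda>t. F (x + t *\<^sub>R d)) has_real_derivative (d \<bullet> G (x + t *\<^sub>R d))) (at t)"
    proof -
      have "(\<lambda>s. (s *\<^sub>R d) \<bullet> G (x + t *\<^sub>R d)) = (*) (d \<bullet> G (x + t *\<^sub>R d))"
        by (auto simp: fun_eq_iff)
      then show ?thesis using \<open>((\<lambda>t. F (x + t *\<^sub>R d)) has_derivative _) (at t)\<close>
        unfolding has_field_derivative_def by simp
    qed
    then show ?thesis unfolding \<psi>_def
      by (auto intro!: derivative_eq_intros)
  qed
  have "\<psi> 1 \<le> \<psi> 0"
  proof (rule DERIV_nonpos_imp_nonincreasing[of 0 1 \<psi>])
    fix t :: real assume t: "0 \<le> t" "t \<le> 1"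
    have "d \<bullet> G (x + t *\<^sub>R d) - d \<bullet> G x = d \<bullet> (G (x + t *\<^sub>R d) - G x)"
      by (simp add: inner_diff_right)
    also have "\<dots> \<le> norm d * norm (G (x + t *\<^sub>R d) - G x)"
      by (rule norm_cauchy_schwarz)
    also have "\<dots> \<le> norm d * (L * norm (t *\<^sub>R d))"
      using lp[of "x + t *\<^sub>R d" x] by (intro mult_left_mono) auto
    also have "\<dots> = L * t * norm d ^ 2" using t by (simp add: power2_eq_square)
    finally show "\<exists>y. DERIV \<psi> t :> y \<and> y \<le> 0" using D[of t] by auto
  qed simp
  then show ?thesis unfolding \<psi>_def d_def by (simp add: inner_commute)
qed



lemma finite_batches: "finite (batches n b)"
proof -
  have "batches n b \<subseteq> Pow {..<n}" by (auto simp: batches_def)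
  then show ?thesis by (rule finite_subset) simp
qed

lemma batches_ne: "b \<le> n \<Longrightarrow> batches n b \<noteq> {}"
  by (auto simp: batches_def intro!: exI[of _ "{..<b}"])

lemma card_batches: "card (batches n b) = n choose b"
  using n_subsets[of "{..<n}" b] by (simp add: batches_def)

lemma card_batches_with:
  assumes i: "i < n" and b: "1 \<le> b"
  shows "card {I \<in> batches n b. i \<in> I} = (n - 1) choose (b - 1)"
proof -
  define S where "S = {J. J \<subseteq> {..<n} - {i} \<and> card J = b - 1}"
  have im: "{I \<in> batches n b. i \<in> I} = insert i ` S"
  proof
    show "{I \<in> batches n b. i \<in> I} \<subseteq> insert i ` S"
    proof
      fix I assume I: "I \<in> {I \<in> batches n b. i \<in> I}"
      then have fI: "finite I" using b by (auto simp: batches_def intro: card_ge_0_finite)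
      have "I - {i} \<in> S" using I fI by (auto simp: S_def batches_def)
      moreover have "I = insert i (I - {i})" using I by auto
      ultimately show "I \<in> insert i ` S" by blast
    qed
  next
    show "insert i ` S \<subseteq> {I \<in> batches n b. i \<in> I}"
    proof
      fix I assume "I \<in> insert i ` S"
      then obtain J where J: "J \<in> S" "I = insert i J" by auto
      have fJ: "finite J" using J(1) by (auto simp: S_def intro: finite_subset)
      have "i \<notin> J" using J(1) by (auto simp: S_def)
      then have "card I = Suc (b - 1)" using J fJ by (simp add: S_def)
      then show "I \<in> {I \<in> batches n b. i \<in> I}" using J i b by (auto simp: S_def batches_def)
    qed
  qed
  have inj: "inj_on (insert i) S"
  proof (rule inj_onI)
    fix x y assume "x \<in> S" "y \<in> S" "insert i x = insert i y"
    then have "i \<notin> x" "i \<notin> y" by (auto simp: S_def)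
    then show "x = y" using \<open>insert i x = insert i y\<close> by (metis Diff_insert_absorb)
  qed
  have "card S = card ({..<n} - {i}) choose (b - 1)"
    unfolding S_def by (rule n_subsets) simp
  also have "card ({..<n} - {i}) = n - 1" using i by simp
  finally show ?thesis using im inj card_image by metis
qed

lemma batch_sum:
  fixes G :: "nat \<Rightarrow> 'a::real_vector \<Rightarrow> 'a"
  assumes b: "1 \<le> b" "b \<le> n"
  shows "(\<Sum>I\<in>batches n b. bgrad G I x) = real (card (batches n b)) *\<^sub>R fgrad G n x"
proof -
  let ?B = "batches n b"
  have "(\<Sum>I\<in>?B. bgrad G I x) = (\<Sum>I\<in>?B. (1 / real b) *\<^sub>R (\<Sum>i\<in>{i \<in> {..<n}. i \<in> I}. G i x))"
  proof (rule sum.cong)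
    fix I assume "I \<in> ?B"
    then have "card I = b" "{i \<in> {..<n}. i \<in> I} = I" by (auto simp: batches_def)
    then show "bgrad G I x = (1 / real b) *\<^sub>R (\<Sum>i\<in>{i \<in> {..<n}. i \<in> I}. G i x)"
      by (simp add: bgrad_def)
  qed simp
  also have "\<dots> = (1 / real b) *\<^sub>R (\<Sum>I\<in>?B. \<Sum>i\<in>{i \<in> {..<n}. i \<in> I}. G i x)"
    by (simp add: scaleR_sum_right)
  also have "(\<Sum>I\<in>?B. \<Sum>i\<in>{i \<in> {..<n}. i \<in> I}. G i x) = (\<Sum>i<n. \<Sum>I\<in>{I \<in> ?B. i \<in> I}. G i x)"
    by (rule sum.swap_restrict) (auto simp: finite_batches)
  also have "\<dots> = (\<Sum>i<n. real ((n - 1) choose (b - 1)) *\<^sub>R G i x)"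
    using card_batches_with[OF _ b(1)] by (intro sum.cong) (simp_all del: One_nat_def add: sum_constant_scaleR)
  also have "\<dots> = real ((n - 1) choose (b - 1)) *\<^sub>R (\<Sum>i<n. G i x)"
    by (simp add: scaleR_sum_right)
  finally have 1: "(\<Sum>I\<in>?B. bgrad G I x) = (real ((n - 1) choose (b - 1)) / real b) *\<^sub>R (\<Sum>i<n. G i x)"
    by simp
  obtain n' b' where nb: "n = Suc n'" "b = Suc b'" using b by (metis Suc_le_D not0_implies_Suc le_trans not_one_le_zero)
  have "real (Suc n') * real (n' choose b') = real (Suc n' choose Suc b') * real (Suc b')"
    using Suc_times_binomial_eq[of n' b'] by (metis of_nat_mult)
  then have "real ((n - 1) choose (b - 1)) / real b = real (card ?B) * (1 / real n)"
    unfolding card_batches nb by (simp add: field_simps)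
  with 1 show ?thesis by (simp add: fgrad_def)
qed



theorem lemma14:
  fixes F :: "nat \<Rightarrow> 'a::euclidean_space \<Rightarrow> real"
    and G :: "nat \<Rightarrow> 'a \<Rightarrow> 'a"
    and n b :: nat and L l \<eta> \<gamma> :: real and x0 :: 'a
  assumes grad: "\<And>z x. z < n \<Longrightarrow> GDERIV (F z) x :> G z x"
    and lip: "\<And>z x y. z < n \<Longrightarrow> norm (G z x - G z y) \<le> L * norm (x - y)"
    and bnd: "\<And>z x. z < n \<Longrightarrow> norm (G z x) \<le> l"
    and L_pos: "L > 0"
    and b_ge: "b \<ge> 1" and n_ge: "n \<ge> 8 * b"
    and step: "\<eta> * L = \<gamma> * (real b / real n) powr (2/3)"
    and gamma_pos: "\<gamma> > 0" and gamma_le: "\<gamma> \<le> 1/3"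
  shows "measure_pmf.expectation (scsg_epoch G n b \<eta> x0)
           (\<lambda>x. (1 / real n) * (\<Sum>z<n. F z x) - (1 / real n) * (\<Sum>z<n. F z x0))
         \<le> 5 * l^2 * \<gamma>^2 / L * (real b / real n) powr (1/3)"
proof -
  have n1: "n \<ge> 1" and bn: "b \<le> n" using b_ge n_ge by auto
  have "norm (G 0 x0) \<le> l" using bnd[of 0 x0] n1 by simp
  then have l0: "l \<ge> 0" using norm_ge_zero[of "G 0 x0"] by linarith
  define f where "f = (\<lambda>x. (1 / real n) * (\<Sum>z<n. F z x))"
  define c where "c = 9 / 2 * L * \<eta>^2 * l^2"
  define B where "B = batches n b"
  define \<mu> where "\<mu> = fgrad G n x0"
  have finB: "finite B" and neB: "B \<noteq> {}" using finite_batches batches_ne[OF bn] by (auto simp: B_def)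
  have cardB: "real (card B) > 0" using finB neB by (simp add: card_gt_0_iff)
  have desc: "f y \<le> f x + (y - x) \<bullet> fgrad G n x + L / 2 * norm (y - x)^2" for x y
  proof -
    have "(\<Sum>z<n. F z y) \<le> (\<Sum>z<n. F z x + (y - x) \<bullet> G z x + L / 2 * norm (y - x)^2)"
      by (intro sum_mono descent[OF grad lip]) auto
    also have "\<dots> = (\<Sum>z<n. F z x) + (y - x) \<bullet> (\<Sum>z<n. G z x) + real n * (L / 2 * norm (y - x)^2)"
      by (simp add: sum.distrib inner_sum_right)
    finally have "(\<Sum>z<n. F z y) \<le> (\<Sum>z<n. F z x) + (y - x) \<bullet> (\<Sum>z<n. G z x) + real n * (L / 2 * norm (y - x)^2)" .
    then have "(1 / real n) * (\<Sum>z<n. F z y) \<le> (1 / real n) * ((\<Sum>z<n. F z x) + (y - x) \<bullet> (\<Sum>z<n. G z x) + real n * (L / 2 * norm (y - x)^2))"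
      by (intro mult_left_mono) auto
    then show ?thesis using n1 unfolding f_def fgrad_def by (simp add: field_simps)
  qed
  have fgb: "norm (fgrad G n x) \<le> l" for x
  proof -
    have "norm (\<Sum>i<n. G i x) \<le> (\<Sum>i<n. l)" using bnd by (intro order.trans[OF norm_sum] sum_mono) auto
    then show ?thesis using n1 by (simp add: fgrad_def field_simps)
  qed
  have bgb: "norm (bgrad G I x) \<le> l" if "I \<in> B" for I x
  proof -
    have I: "I \<subseteq> {..<n}" "card I = b" using that by (auto simp: B_def batches_def)
    have "norm (\<Sum>i\<in>I. G i x) \<le> (\<Sum>i\<in>I. l)" using bnd I by (intro order.trans[OF norm_sum] sum_mono) auto
    then show ?thesis using I b_ge by (simp add: bgrad_def field_simps)
  qed
  have step_exp: "measure_pmf.expectation (scsg_step G n b \<eta> x0 \<mu> x) f \<le> f x + c" for x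
  proof -
    define v where "v = (\<lambda>I. bgrad G I x - bgrad G I x0 + \<mu>)"
    define g where "g = fgrad G n x"
    have vb: "norm (v I) \<le> 3 * l" if "I \<in> B" for I
    proof -
      have "norm (v I) \<le> norm (bgrad G I x - bgrad G I x0) + norm \<mu>"
        unfolding v_def by (rule norm_triangle_ineq)
      moreover have "norm (bgrad G I x - bgrad G I x0) \<le> norm (bgrad G I x) + norm (bgrad G I x0)"
        by (rule norm_triangle_ineq4)
      ultimately show ?thesis using bgb[OF that, of x] bgb[OF that, of x0] fgb[of x0] unfolding \<mu>_def by linarith
    qed
    have each: "f (x - \<eta> *\<^sub>R v I) \<le> f x - \<eta> * (v I \<bullet> g) + c" if "I \<in> B" for I
    proof -
      have "f (x - \<eta> *\<^sub>R v I) \<le> f x + (- (\<eta> *\<^sub>R v I)) \<bullet> g + L / 2 * norm (\<eta> *\<^sub>R v I)^2"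
        using desc[where x=x and y="x - \<eta> *\<^sub>R v I"] unfolding g_def by simp
      also have "norm (\<eta> *\<^sub>R v I)^2 = \<eta>^2 * norm (v I)^2" by (simp add: power_mult_distrib)
      finally have 1: "f (x - \<eta> *\<^sub>R v I) \<le> f x + (- (\<eta> *\<^sub>R v I)) \<bullet> g + L / 2 * (\<eta>^2 * norm (v I)^2)" .
      have "norm (v I)^2 \<le> (3 * l)^2" using vb[OF that] by (intro power_mono) auto
      then have "L / 2 * (\<eta>^2 * norm (v I)^2) \<le> L / 2 * (\<eta>^2 * (3 * l)^2)"
        using L_pos by (intro mult_left_mono) auto
      also have "\<dots> = c" unfolding c_def by (simp add: power_mult_distrib)
      finally show ?thesis using 1 by simp
    qed
    have sv: "(\<Sum>I\<in>B. v I) = real (card B) *\<^sub>R g"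
      unfolding v_def g_def \<mu>_def B_def
      using batch_sum[OF b_ge bn, of G x] batch_sum[OF b_ge bn, of G x0]
      by (simp add: sum.distrib sum_subtractf sum_constant_scaleR)
    have "measure_pmf.expectation (scsg_step G n b \<eta> x0 \<mu> x) f = (\<Sum>I\<in>B. f (x - \<eta> *\<^sub>R v I)) / real (card B)"
      unfolding scsg_step_def v_def B_def using finB neB unfolding B_def
      by (simp add: integral_pmf_of_set)
    also have "(\<Sum>I\<in>B. f (x - \<eta> *\<^sub>R v I)) \<le> (\<Sum>I\<in>B. f x - \<eta> * (v I \<bullet> g) + c)"
      using each by (rule sum_mono)
    also have "\<dots> = real (card B) * (f x + c) - \<eta> * ((\<Sum>I\<in>B. v I) \<bullet> g)"
      by (simp add: sum.distrib sum_subtractf inner_sum_left sum_distrib_left algebra_simps)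
    also have "\<dots> = real (card B) * (f x + c) - \<eta> * real (card B) * (g \<bullet> g)"
      by (simp add: sv)
    finally have "measure_pmf.expectation (scsg_step G n b \<eta> x0 \<mu> x) f
        \<le> (real (card B) * (f x + c) - \<eta> * real (card B) * (g \<bullet> g)) / real (card B)"
      using cardB by (simp add: divide_right_mono)
    also have "\<dots> = f x + c - \<eta> * (g \<bullet> g)" using cardB by (simp add: field_simps)
    also have "\<dots> \<le> f x + c"
    proof -
      have "\<gamma> * (real b / real n) powr (2/3) > 0" using gamma_pos n1 b_ge by simp
      then have "\<eta> * L > 0" using step by simp
      then have "\<eta> > 0" using L_pos by (simp add: zero_less_mult_iff)
      then show ?thesis by simp
    qed
    finally show ?thesis .
  qed
  have fin_step: "finite (set_pmf (scsg_step G n b \<eta> x0 \<mu> x))" for x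
    using finB neB unfolding scsg_step_def B_def by simp
  have fin_iter: "finite (set_pmf (scsg_iter G n b \<eta> x0 \<mu> j x0))" for j
    by (induction j) (use fin_step in auto)
  have iter_exp: "measure_pmf.expectation (scsg_iter G n b \<eta> x0 \<mu> j x0) f \<le> f x0 + real j * c" for j
  proof (induction j)
    case 0
    then show ?case by simp
  next
    case (Suc j)
    let ?M = "scsg_iter G n b \<eta> x0 \<mu> j x0"
    have "measure_pmf.expectation (scsg_iter G n b \<eta> x0 \<mu> (Suc j) x0) f
        = (\<integral>x. measure_pmf.expectation (scsg_step G n b \<eta> x0 \<mu> x) f \<partial>?M)"
      using bind_int[of ?M "scsg_step G n b \<eta> x0 \<mu>" f] fin_iter[of "Suc j"] fin_step
      by (simp add: integrable_measure_pmf_finite)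
    also have "\<dots> \<le> (\<integral>x. f x + c \<partial>?M)"
      using step_exp fin_iter[of j] by (intro integral_mono) (auto simp: integrable_measure_pmf_finite)
    also have "\<dots> = measure_pmf.expectation ?M f + c"
      using fin_iter[of j] by (simp add: integrable_measure_pmf_finite)
    finally show ?case using Suc by (simp add: algebra_simps)
  qed
  define p where "p = real b / (real n + real b)"
  have p: "p \<in> {0<..1}" using b_ge n1 unfolding p_def by (auto simp: field_simps)
  define h where "h = (\<lambda>x. f x - f x0)"
  have epoch: "scsg_epoch G n b \<eta> x0 = bind_pmf (geometric_pmf p) (\<lambda>N. scsg_iter G n b \<eta> x0 \<mu> N x0)"
    unfolding scsg_epoch_def p_def \<mu>_def by simp
  have hN: "measure_pmf.expectation (scsg_iter G n b \<eta> x0 \<mu> N x0) h \<le> real N * c" for N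
    using iter_exp[of N] fin_iter[of N] unfolding h_def
    by (simp add: integrable_measure_pmf_finite)
  have c0: "c \<ge> 0" unfolding c_def using L_pos by simp
  have key: "c * (real n / real b) \<le> 5 * l^2 * \<gamma>^2 / L * (real b / real n) powr (1/3)"
  proof -
    define r where "r = real b / real n"
    have r0: "r > 0" unfolding r_def using b_ge n1 by simp
    have eta: "\<eta> = \<gamma> * r powr (2/3) / L" using step L_pos unfolding r_def by (simp add: field_simps)
    have sq: "(r powr (2/3))^2 = r * r powr (1/3)"
    proof -
      have "(r powr (2/3))^2 = r powr (2/3 + 2/3)"
        unfolding power2_eq_square by (rule powr_add[symmetric])
      also have "(2/3 + 2/3) = (1 + 1/3::real)" by simp
      also have "r powr (1 + 1/3) = r powr 1 * r powr (1/3)" by (rule powr_add)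
      also have "r powr 1 = r" using r0 by simp
      finally show ?thesis .
    qed
    have "c * (real n / real b) = 9 / 2 * (l^2 * \<gamma>^2 / L * r powr (1/3))"
      unfolding c_def eta using L_pos r0 sq unfolding r_def
      by (simp add: field_simps power2_eq_square)
    also have "\<dots> \<le> 5 * (l^2 * \<gamma>^2 / L * r powr (1/3))"
      using L_pos by (intro mult_right_mono) auto
    finally show ?thesis unfolding r_def by simp
  qed
  have "measure_pmf.expectation (scsg_epoch G n b \<eta> x0) h \<le> c * (real n / real b)"
  proof (cases "integrable (measure_pmf (scsg_epoch G n b \<eta> x0)) h")
    case True
    have B: "integrable (geometric_pmf p) (\<lambda>N. measure_pmf.expectation (scsg_iter G n b \<eta> x0 \<mu> N x0) h)
      \<and> measure_pmf.expectation (scsg_epoch G n b \<eta> x0) h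
        = (\<integral>N. measure_pmf.expectation (scsg_iter G n b \<eta> x0 \<mu> N x0) h \<partial>geometric_pmf p)"
      unfolding epoch using True[unfolded epoch] fin_iter
      by (intro bind_int) (auto simp: integrable_measure_pmf_finite)
    have ig: "integrable (geometric_pmf p) (\<lambda>N. real N * c)"
      using integrable_real_geometric_pmf[OF p] by simp
    have "measure_pmf.expectation (scsg_epoch G n b \<eta> x0) h \<le> (\<integral>N. real N * c \<partial>geometric_pmf p)"
    proof -
      have "measure_pmf.expectation (scsg_epoch G n b \<eta> x0) h
        = (\<integral>N. measure_pmf.expectation (scsg_iter G n b \<eta> x0 \<mu> N x0) h \<partial>geometric_pmf p)"
        using B by simp
      also have "\<dots> \<le> (\<integral>N. real N * c \<partial>geometric_pmf p)"
        using B ig hN by (intro integral_mono) auto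
      finally show ?thesis .
    qed
    also have "\<dots> = (1 - p) / p * c"
      using expectation_geometric_pmf[OF p] by simp
    also have "(1 - p) / p = real n / real b"
    proof -
      have pos: "real n + real b > 0" "real b > 0" using b_ge n1 by auto
      have "1 - p = real n / (real n + real b)" unfolding p_def using pos by (simp add: field_simps)
      then show ?thesis unfolding p_def using pos by simp
    qed
    finally show ?thesis by (simp add: mult.commute)
  next
    case False
    then show ?thesis using c0 by (simp add: not_integrable_integral_eq)
  qed
  with key show ?thesis unfolding h_def f_def by simp
qed

end
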